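(* Let $G,H$ be graphs with $H$ connected, let $b$ be a positive integer, and let $G^*$ be the $(H,b)$-core of $G$. If, in the $(1:b)$ Maker-Breaker vertex $H$-game (resp. the $(1:b)$ Client-Waiter vertex $H$-game), Breaker (resp. Waiter) has a winning strategy when the game is played on $G^*$, then Breaker (resp. Waiter) has a winning strategy when the game is played on $G$ (with the same player moving first).
   Context: Fix a graph $G$, a connected graph $H$ and a positive integer $b$. With respect to $G,H,b$: a bad vertex is a vertex of $G$ lying in no copy of $H$ in $G$; a bad edge is an edge of $G$ lying in no copy of $H$ in $G$; a bad set is a set $U\subseteq V(G)$ with $2\le|U|\le b+1$ such that no copy $\hat H$ of $H$ in $G$ satisfies $|V(\hat H)\cap U|=1$; a small component is a connected component of $G$ with at most $(b+1)(v(H)-1)$ vertices. A graph is $(H,b)$-stable if it contains no bad vertex, bad edge, bad set or small component (with respect to itself, $H$ and $b$). The $(H,b)$-core of $G$ is the union of all $(H,b)$-stable subgraphs of $G$. The $(1:b)$ Maker-Breaker vertex $H$-game on a graph: Maker claims one and Breaker $b$ previously unclaimed vertices per turn, alternately, until all are claimed; Maker wins iff the subgraph induced by his vertices contains a copy of $H$. The $(1:b)$ Client-Waiter vertex $H$-game: in each round Waiter offers $t$ free vertices with $1\le t\le b+1$, Client claims one and Waiter the rest; Client wins iff the subgraph induced by his vertices contains a copy of $H$, otherwise Waiter wins. *)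

theory Defs
  imports Main
begin

type_synonym 'a graph = "'a set \<times> 'a set set"

definition verts :: "'a graph \<Rightarrow> 'a set" where "verts G = fst G"
definition edges :: "'a graph \<Rightarrow> 'a set set" where "edges G = snd G"

definition graph :: "'a graph \<Rightarrow> bool" where
  "graph G \<longleftrightarrow> finite (verts G) \<and>
     (\<forall>e\<in>edges G. \<exists>x y. x \<noteq> y \<and> x \<in> verts G \<and> y \<in> verts G \<and> e = {x, y})"

definition adj :: "'a graph \<Rightarrow> 'a \<Rightarrow> 'a \<Rightarrow> bool" where
  "adj G x y \<longleftrightarrow> {x, y} \<in> edges G"

definition connected_graph :: "'a graph \<Rightarrow> bool" where
  "connected_graph G \<longleftrightarrow> verts G \<noteq> {} \<and>
     (\<forall>x\<in>verts G. \<forall>y\<in>verts G. (adj G)\<^sup>*\<^sup>* x y)"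

definition component :: "'a graph \<Rightarrow> 'a \<Rightarrow> 'a set" where
  "component G v = {u \<in> verts G. (adj G)\<^sup>*\<^sup>* v u}"

definition subgraph :: "'a graph \<Rightarrow> 'a graph \<Rightarrow> bool" where
  "subgraph G' G \<longleftrightarrow> graph G' \<and> verts G' \<subseteq> verts G \<and> edges G' \<subseteq> edges G"

text \<open>An embedding of H into G; its image (vertex set f ` V(H), edge set the images
  of the edges of H) is a copy of H in G, and every copy arises this way.\<close>
definition embedding :: "'b graph \<Rightarrow> 'a graph \<Rightarrow> ('b \<Rightarrow> 'a) \<Rightarrow> bool" where
  "embedding H G f \<longleftrightarrow> inj_on f (verts H) \<and> f ` verts H \<subseteq> verts G \<and>
     (\<forall>e\<in>edges H. f ` e \<in> edges G)"

definition bad_vertex :: "'b graph \<Rightarrow> 'a graph \<Rightarrow> 'a \<Rightarrow> bool" where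
  "bad_vertex H G v \<longleftrightarrow> v \<in> verts G \<and> \<not> (\<exists>f. embedding H G f \<and> v \<in> f ` verts H)"

definition bad_edge :: "'b graph \<Rightarrow> 'a graph \<Rightarrow> 'a set \<Rightarrow> bool" where
  "bad_edge H G e \<longleftrightarrow> e \<in> edges G \<and>
     \<not> (\<exists>f. embedding H G f \<and> e \<in> (\<lambda>d. f ` d) ` edges H)"

definition bad_set :: "'b graph \<Rightarrow> nat \<Rightarrow> 'a graph \<Rightarrow> 'a set \<Rightarrow> bool" where
  "bad_set H b G U \<longleftrightarrow> U \<subseteq> verts G \<and> 2 \<le> card U \<and> card U \<le> b + 1 \<and>
     \<not> (\<exists>f. embedding H G f \<and> card (f ` verts H \<inter> U) = 1)"

definition small_component :: "'b graph \<Rightarrow> nat \<Rightarrow> 'a graph \<Rightarrow> 'a set \<Rightarrow> bool" where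
  "small_component H b G C \<longleftrightarrow> (\<exists>v\<in>verts G. C = component G v) \<and>
     card C \<le> (b + 1) * (card (verts H) - 1)"

definition stable :: "'b graph \<Rightarrow> nat \<Rightarrow> 'a graph \<Rightarrow> bool" where
  "stable H b G \<longleftrightarrow> (\<nexists>v. bad_vertex H G v) \<and> (\<nexists>e. bad_edge H G e) \<and>
     (\<nexists>U. bad_set H b G U) \<and> (\<nexists>C. small_component H b G C)"

definition core :: "'b graph \<Rightarrow> nat \<Rightarrow> 'a graph \<Rightarrow> 'a graph" where
  "core H b G =
    (\<Union>{verts G' | G'. subgraph G' G \<and> stable H b G'},
     \<Union>{edges G' | G'. subgraph G' G \<and> stable H b G'})"

definition has_copy_in :: "'b graph \<Rightarrow> 'a graph \<Rightarrow> 'a set \<Rightarrow> bool" where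
  "has_copy_in H G M \<longleftrightarrow> (\<exists>f. embedding H G f \<and> f ` verts H \<subseteq> M)"

text \<open>Position: Maker's vertices M, free
  vertices F, and whether it is Maker's turn.\<close>
inductive mb_bwin :: "'b graph \<Rightarrow> nat \<Rightarrow> 'a graph \<Rightarrow> 'a set \<Rightarrow> 'a set \<Rightarrow> bool \<Rightarrow> bool"
  for H b G where
  finished: "F = {} \<Longrightarrow> \<not> has_copy_in H G M \<Longrightarrow> mb_bwin H b G M F t"
| maker_move: "F \<noteq> {} \<Longrightarrow> (\<forall>v\<in>F. mb_bwin H b G (insert v M) (F - {v}) False)
     \<Longrightarrow> mb_bwin H b G M F True"
| breaker_move: "F \<noteq> {} \<Longrightarrow> S \<subseteq> F \<Longrightarrow> card S = min b (card F)
     \<Longrightarrow> mb_bwin H b G M (F - S) True \<Longrightarrow> mb_bwin H b G M F False"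

definition MB_breaker_wins :: "'b graph \<Rightarrow> nat \<Rightarrow> 'a graph \<Rightarrow> bool \<Rightarrow> bool" where
  "MB_breaker_wins H b G maker_first = mb_bwin H b G {} (verts G) maker_first"

text \<open>Client-Waiter (1:b) vertex H-game: Waiter offers t free vertices, 1 <= t <= b+1,
  Client claims one of them and Waiter the rest. C = Client's vertices, F = free.\<close>
inductive cw_wwin :: "'b graph \<Rightarrow> nat \<Rightarrow> 'a graph \<Rightarrow> 'a set \<Rightarrow> 'a set \<Rightarrow> bool"
  for H b G where
  finished: "F = {} \<Longrightarrow> \<not> has_copy_in H G C \<Longrightarrow> cw_wwin H b G C F"
| round: "S \<subseteq> F \<Longrightarrow> 1 \<le> card S \<Longrightarrow> card S \<le> b + 1 \<Longrightarrow>
     (\<forall>v\<in>S. cw_wwin H b G (insert v C) (F - S)) \<Longrightarrow> cw_wwin H b G C F"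

definition CW_waiter_wins :: "'b graph \<Rightarrow> nat \<Rightarrow> 'a graph \<Rightarrow> bool" where
  "CW_waiter_wins H b G = cw_wwin H b G {} (verts G)"

end

theory Submission
  imports Defs
begin



lemma has_copy_mono: "has_copy_in H G M \<Longrightarrow> M \<subseteq> M2 \<Longrightarrow> has_copy_in H G M2"
  unfolding has_copy_in_def by blast

lemma mb_nocopy: "mb_bwin H b G M F t \<Longrightarrow> \<not> has_copy_in H G M"
proof (induction rule: mb_bwin.induct)
  case (finished F M t) thus ?case by simp
next
  case (maker_move F M)
  then obtain v where "v \<in> F" by blast
  with maker_move show ?case using has_copy_mono[of H G M "insert v M"] by blast
next
  case (breaker_move F S M) thus ?case by simp
qed

lemma mb_mono: "mb_bwin H b G M F t \<Longrightarrow> finite F \<Longrightarrow> F2 \<subseteq> F \<Longrightarrow> mb_bwin H b G M F2 t"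
proof (induction arbitrary: F2 rule: mb_bwin.induct)
  case (finished F M t) thus ?case by (auto intro: mb_bwin.finished)
next
  case (maker_move F M)
  have W: "mb_bwin H b G M F True"
    using maker_move.IH \<open>F \<noteq> {}\<close> by (intro mb_bwin.maker_move) blast+
  show ?case
  proof (cases "F2 = {}")
    case True
    then show ?thesis using mb_nocopy[OF W] by (auto intro: mb_bwin.finished)
  next
    case False
    show ?thesis
    proof (rule mb_bwin.maker_move[OF False], intro ballI)
      fix v assume "v \<in> F2"
      then have "v \<in> F" "finite (F - {v})" "F2 - {v} \<subseteq> F - {v}" using maker_move.prems by auto
      then show "mb_bwin H b G (insert v M) (F2 - {v}) False"
        using maker_move.IH by blast
    qed
  qed
next
  case (breaker_move F S M)
  have W: "mb_bwin H b G M F False" using breaker_move.hyps by (auto intro: mb_bwin.breaker_move)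
  show ?case
  proof (cases "F2 = {}")
    case True
    then show ?thesis using mb_nocopy[OF W] by (auto intro: mb_bwin.finished)
  next
    case False
    have fF2: "finite F2" using breaker_move.prems finite_subset by blast
    define A where "A = F2 \<inter> S"
    have fS: "finite S" using breaker_move finite_subset by blast
    have cA1: "card A \<le> card S" unfolding A_def using fS by (simp add: card_mono)
    have cA2: "card A \<le> card F2" unfolding A_def using fF2 by (simp add: card_mono)
    have cA: "card A \<le> min b (card F2)" using cA1 cA2 breaker_move.hyps(3) by simp
    have "min b (card F2) - card A \<le> card (F2 - A)"
      using cA2 fF2 by (simp add: A_def card_Diff_subset)
    then obtain B where B: "B \<subseteq> F2 - A" "card B = min b (card F2) - card A"
      by (meson obtain_subset_with_card_n)
    have fA: "finite A" using fF2 A_def by simp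
    have fB: "finite B" using B fF2 finite_subset by blast
    have cS2: "card (A \<union> B) = min b (card F2)"
      using B cA fA fB by (subst card_Un_disjoint) auto
    have sub: "F2 - (A \<union> B) \<subseteq> F - S" using breaker_move.prems A_def by blast
    have "mb_bwin H b G M (F2 - (A \<union> B)) True"
      using breaker_move.IH[OF _ sub] breaker_move.prems by simp
    then show ?thesis
      using False cS2 B A_def by (intro mb_bwin.breaker_move[of F2 "A \<union> B"]) auto
  qed
qed




definition IMx :: "'a set \<Rightarrow> nat \<Rightarrow> 'a set \<Rightarrow> 'a set \<Rightarrow> bool" where
  "IMx X b M F \<longleftrightarrow> card (M \<inter> X) * (b+1) \<le> card (X - F) + b \<and>
     (F \<inter> X \<noteq> {} \<longrightarrow> card (M \<inter> X) * (b+1) \<le> card (X - F))"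
definition IPx :: "'a set \<Rightarrow> nat \<Rightarrow> 'a set \<Rightarrow> 'a set \<Rightarrow> bool" where
  "IPx X b M F \<longleftrightarrow> card (M \<inter> X) * (b+1) \<le> card (X - F) + b"

lemma IMx_mono: "finite X \<Longrightarrow> IMx X b M F \<Longrightarrow> IMx X b M (F - S)"
proof -
  assume fX: "finite X" and I: "IMx X b M F"
  have "card (X - F) \<le> card (X - (F - S))" using fX by (intro card_mono) auto
  moreover have "(F - S) \<inter> X \<noteq> {} \<Longrightarrow> F \<inter> X \<noteq> {}" by blast
  ultimately show ?thesis using I unfolding IMx_def by auto
qed

lemma mb_sim:
  assumes fin: "finite (verts G)" and XV: "X \<subseteq> verts G" and VG': "verts G' = verts G - X"
    and b1: "b \<ge> 1"
    and P: "\<And>M. card (M \<inter> X) * (b+1) \<le> card X + b \<Longrightarrow> has_copy_in H G M \<Longrightarrow> has_copy_in H G' (M \<inter> verts G')"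
  shows "card F = n \<Longrightarrow> F \<subseteq> verts G \<Longrightarrow> M \<inter> F = {} \<Longrightarrow>
     (t \<and> IMx X b M F \<and> mb_bwin H b G' (M \<inter> verts G') (F \<inter> verts G') True)
   \<or> (\<not> t \<and> IMx X b M F \<and> mb_bwin H b G' (M \<inter> verts G') (F \<inter> verts G') False)
   \<or> (\<not> t \<and> IPx X b M F \<and> mb_bwin H b G' (M \<inter> verts G') (F \<inter> verts G') True)
   \<Longrightarrow> mb_bwin H b G M F t"
proof (induction n arbitrary: M F t rule: less_induct)
  case (less n)
  let ?V' = "verts G'"
  have fF: "finite F" using less.prems(2) fin finite_subset by blast
  have fX: "finite X" using XV fin finite_subset by blast
  have common: "card (M \<inter> X) * (b+1) \<le> card (X - F) + b"
    using less.prems(4) unfolding IMx_def IPx_def by auto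
  show ?case
  proof (cases "F = {}")
    case True
    have W': "\<exists>t'. mb_bwin H b G' (M \<inter> ?V') (F \<inter> ?V') t'" using less.prems(4) by blast
    then have nc: "\<not> has_copy_in H G' (M \<inter> ?V')" using True mb_nocopy by fastforce
    have "card (M \<inter> X) * (b+1) \<le> card X + b" using common True by simp
    then have "\<not> has_copy_in H G M" using P nc by blast
    then show ?thesis using True by (simp add: mb_bwin.finished)
  next
    case Fne: False
    show ?thesis
    proof (cases t)
      case True
      then have IM: "IMx X b M F" and W: "mb_bwin H b G' (M \<inter> ?V') (F \<inter> ?V') True"
        using less.prems(4) by auto
      have "mb_bwin H b G M F True"
      proof (rule mb_bwin.maker_move[OF Fne], intro ballI)
        fix v assume vF: "v \<in> F"
        have lt: "card (F - {v}) < n" using card_Diff1_less[OF fF vF] less.prems(1) by simp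
        have sub: "F - {v} \<subseteq> verts G" using less.prems(2) by blast
        have disj: "insert v M \<inter> (F - {v}) = {}" using less.prems(3) by blast
        show "mb_bwin H b G (insert v M) (F - {v}) False"
        proof (cases "v \<in> ?V'")
          case True
          have "mb_bwin H b G' (insert v (M \<inter> ?V')) (F \<inter> ?V' - {v}) False"
            using W by (cases rule: mb_bwin.cases) (use True vF in auto)
          moreover have "insert v M \<inter> ?V' = insert v (M \<inter> ?V')" using True by blast
          moreover have "(F - {v}) \<inter> ?V' = F \<inter> ?V' - {v}" by blast
          moreover have "IMx X b (insert v M) (F - {v})"
          proof -
            have "v \<notin> X" using True VG' by blast
            then have "insert v M \<inter> X = M \<inter> X" "X - (F - {v}) = X - F" "(F - {v}) \<inter> X = F \<inter> X" by auto
            then show ?thesis using IM unfolding IMx_def by simp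
          qed
          ultimately show ?thesis using less.IH[OF lt refl sub disj] by auto
        next
          case False
          then have vX: "v \<in> X" using vF less.prems(2) VG' by blast
          have "insert v M \<inter> ?V' = M \<inter> ?V'" using False by blast
          moreover have "(F - {v}) \<inter> ?V' = F \<inter> ?V'" using False by blast
          moreover have "IPx X b (insert v M) (F - {v})"
          proof -
            have vM: "v \<notin> M" using vF less.prems(3) by blast
            have e1: "insert v M \<inter> X = insert v (M \<inter> X)" using vX by blast
            have c1: "card (insert v M \<inter> X) = Suc (card (M \<inter> X))"
              unfolding e1 using vM fX by simp
            have e2: "X - (F - {v}) = insert v (X - F)" using vX by blast
            have c2: "card (X - (F - {v})) = Suc (card (X - F))"
              unfolding e2 using vF fX by simp
            have "card (M \<inter> X) * (b+1) \<le> card (X - F)" using IM vF vX unfolding IMx_def by blast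
            then show ?thesis unfolding IPx_def c1 c2 by simp
          qed
          ultimately show ?thesis using less.IH[OF lt refl sub disj] W by auto
        qed
      qed
      then show ?thesis using True by simp
    next
      case tF: False
      have step: "mb_bwin H b G M F False"
        if S: "S \<subseteq> F" "card S = min b (card F)" "IMx X b M (F - S)"
          "mb_bwin H b G' (M \<inter> ?V') ((F - S) \<inter> ?V') True" for S
      proof -
        have "card F \<ge> 1" using Fne fF by (simp add: Suc_le_eq card_gt_0_iff)
        then have cS: "card S \<ge> 1" using S(2) b1 by simp
        have fS: "finite S" using S(1) fF finite_subset by blast
        have "card S \<le> card F" using card_mono[OF fF S(1)] .
        then have lt: "card (F - S) < n" using cS S(1) fS less.prems(1) fF
          by (simp add: card_Diff_subset)
        have "mb_bwin H b G M (F - S) True"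
          using less.IH[OF lt refl _ _] less.prems(2,3) S by blast
        then show ?thesis using Fne S by (intro mb_bwin.breaker_move[of F S]) auto
      qed
      have cardF: "card F = card (F \<inter> ?V') + card (F \<inter> X)"
      proof -
        have "F = (F \<inter> ?V') \<union> (F \<inter> X)" using less.prems(2) VG' by blast
        moreover have "(F \<inter> ?V') \<inter> (F \<inter> X) = {}" using VG' by blast
        ultimately show ?thesis using fF by (metis card_Un_disjoint finite_Int)
      qed
      from less.prems(4) tF
      consider (A) "IMx X b M F" "mb_bwin H b G' (M \<inter> ?V') (F \<inter> ?V') False"
        | (B) "IPx X b M F" "mb_bwin H b G' (M \<inter> ?V') (F \<inter> ?V') True" by blast
      then have "mb_bwin H b G M F False"
      proof cases
        case A
        show ?thesis
        proof (cases "F \<inter> ?V' = {}")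
          case True
          obtain S where S: "S \<subseteq> F" "card S = min b (card F)"
            by (meson min.cobounded2 obtain_subset_with_card_n)
          have nc: "\<not> has_copy_in H G' (M \<inter> ?V')" using mb_nocopy[OF A(2)] .
          have "mb_bwin H b G' (M \<inter> ?V') ((F - S) \<inter> ?V') True"
            using True nc by (intro mb_bwin.finished) auto
          then show ?thesis using step[OF S IMx_mono[OF fX A(1)]] by blast
        next
          case False
          from A(2) False obtain S' where S': "S' \<subseteq> F \<inter> ?V'" "card S' = min b (card (F \<inter> ?V'))"
            "mb_bwin H b G' (M \<inter> ?V') (F \<inter> ?V' - S') True"
            by (cases rule: mb_bwin.cases) auto
          have "min b (card F) - card S' \<le> card (F \<inter> X)" using S'(2) cardF by simp
          then obtain Q where Q: "Q \<subseteq> F \<inter> X" "card Q = min b (card F) - card S'"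
            by (meson obtain_subset_with_card_n)
          have fS': "finite S'" using S'(1) fF finite_subset by blast
          have fQ: "finite Q" using Q(1) fF finite_subset by blast
          have dj: "S' \<inter> Q = {}" using S'(1) Q(1) VG' by blast
          have "card (S' \<union> Q) = min b (card F)"
            using card_Un_disjoint[OF fS' fQ dj] Q(2) S'(2) cardF by simp
          moreover have "(F - (S' \<union> Q)) \<inter> ?V' = F \<inter> ?V' - S'" using Q(1) VG' by blast
          moreover have "S' \<union> Q \<subseteq> F" using S'(1) Q(1) by blast
          ultimately show ?thesis using step[of "S' \<union> Q"] IMx_mono[OF fX A(1)] S'(3) by auto
        qed
      next
        case B
        show ?thesis
        proof (cases "card (F \<inter> X) \<ge> b")
          case True
          then obtain S where S: "S \<subseteq> F \<inter> X" "card S = b"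
            by (meson obtain_subset_with_card_n)
          have mb: "min b (card F) = b" using True cardF by simp
          have fS: "finite S" using S(1) fF finite_subset by blast
          have e: "X - (F - S) = (X - F) \<union> S" using S(1) by blast
          have "card (X - (F - S)) = card (X - F) + b"
            unfolding e using S fS fX by (subst card_Un_disjoint) auto
          then have "IMx X b M (F - S)" using B(1) unfolding IMx_def IPx_def by simp
          moreover have "(F - S) \<inter> ?V' = F \<inter> ?V'" using S(1) VG' by blast
          ultimately show ?thesis using step[of S] S mb B(2) by auto
        next
          case False
          have "min b (card F) - card (F \<inter> X) \<le> card (F \<inter> ?V')" using cardF by simp
          then obtain Q where Q: "Q \<subseteq> F \<inter> ?V'" "card Q = min b (card F) - card (F \<inter> X)"
            by (meson obtain_subset_with_card_n)
          have fQ: "finite Q" using Q(1) fF finite_subset by blast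
          have fFX: "finite (F \<inter> X)" using fF by simp
          have dj: "(F \<inter> X) \<inter> Q = {}" using Q(1) VG' by blast
          have "card ((F \<inter> X) \<union> Q) = min b (card F)"
            using card_Un_disjoint[OF fFX fQ dj] Q(2) False cardF by simp
          moreover have "(F - ((F \<inter> X) \<union> Q)) \<inter> ?V' = F \<inter> ?V' - Q" using VG' by blast
          moreover have "IMx X b M (F - ((F \<inter> X) \<union> Q))"
          proof -
            have e1: "X - (F - ((F \<inter> X) \<union> Q)) = X" by blast
            have e2: "(F - ((F \<inter> X) \<union> Q)) \<inter> X = {}" by blast
            have "card (X - F) \<le> card X" using fX by (simp add: card_mono)
            then have "card (M \<inter> X) * (b+1) \<le> card X + b" using B(1) unfolding IPx_def by linarith
            then show ?thesis unfolding IMx_def e1 e2 by simp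
          qed
          moreover have "mb_bwin H b G' (M \<inter> ?V') (F \<inter> ?V' - Q) True"
            by (rule mb_mono[OF B(2)]) (use fF in auto)
          ultimately show ?thesis using step[of "(F \<inter> X) \<union> Q"] Q(1) by auto
        qed
      qed
      then show ?thesis using tF by simp
    qed
  qed
qed

lemma mb_lift:
  assumes fin: "finite (verts G)" and XV: "X \<subseteq> verts G" and VG': "verts G' = verts G - X"
    and b1: "b \<ge> 1"
    and P: "\<And>M. card (M \<inter> X) * (b+1) \<le> card X + b \<Longrightarrow> has_copy_in H G M \<Longrightarrow> has_copy_in H G' (M \<inter> verts G')"
    and W: "mb_bwin H b G' {} (verts G') t"
  shows "mb_bwin H b G {} (verts G) t"
proof -
  have "IMx X b {} (verts G)" unfolding IMx_def by simp
  moreover have "verts G \<inter> verts G' = verts G'" "{} \<inter> verts G' = {}" using VG' by auto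
  ultimately show ?thesis
    using mb_sim[OF fin XV VG' b1 P, of "verts G" "card (verts G)" "{}" t] W by (cases t) auto
qed




lemma cw_phase2:
  assumes VG': "verts G' = verts G - X"
    and P: "\<And>M. card (M \<inter> X) * (b+1) \<le> card X + b \<Longrightarrow> has_copy_in H G M \<Longrightarrow> has_copy_in H G' (M \<inter> verts G')"
  shows "cw_wwin H b G' C' F' \<Longrightarrow> F' \<inter> X = {} \<Longrightarrow> C' \<inter> X = {} \<Longrightarrow> D \<subseteq> X \<Longrightarrow>
     card D * (b+1) \<le> card X + b \<Longrightarrow> cw_wwin H b G (C' \<union> D) F'"
proof (induction rule: cw_wwin.induct)
  case (finished F C)
  have e: "(C \<union> D) \<inter> X = D" using finished by blast
  have "(C \<union> D) \<inter> verts G' \<subseteq> C" using VG' finished by blast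
  then have "\<not> has_copy_in H G' ((C \<union> D) \<inter> verts G')" using finished has_copy_mono by blast
  then have "\<not> has_copy_in H G (C \<union> D)" using P[of "C \<union> D"] e finished by auto
  then show ?case using finished by (simp add: cw_wwin.finished)
next
  case (round S F C)
  show ?case
  proof (rule cw_wwin.round[of S])
    show "S \<subseteq> F" "1 \<le> card S" "card S \<le> b + 1" using round by auto
    show "\<forall>v\<in>S. cw_wwin H b G (insert v (C \<union> D)) (F - S)"
    proof
      fix v assume vS: "v \<in> S"
      then have "v \<notin> X" using round by blast
      then have "(F - S) \<inter> X = {}" "insert v C \<inter> X = {}" using round by auto
      then have "cw_wwin H b G (insert v C \<union> D) (F - S)" using round vS by blast
      then show "cw_wwin H b G (insert v (C \<union> D)) (F - S)" by simp
    qed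
  qed
qed

lemma cw_phase1:
  assumes fin: "finite (verts G)" and XV: "X \<subseteq> verts G" and VG': "verts G' = verts G - X"
    and P: "\<And>M. card (M \<inter> X) * (b+1) \<le> card X + b \<Longrightarrow> has_copy_in H G M \<Longrightarrow> has_copy_in H G' (M \<inter> verts G')"
    and W: "cw_wwin H b G' {} (verts G')"
  shows "card (F \<inter> X) = n \<Longrightarrow> F \<subseteq> verts G \<Longrightarrow> verts G' \<subseteq> F \<Longrightarrow> C \<subseteq> X \<Longrightarrow> C \<inter> F = {} \<Longrightarrow>
     (F \<inter> X \<noteq> {} \<longrightarrow> card C * (b+1) + card (F \<inter> X) \<le> card X) \<Longrightarrow>
     card C * (b+1) \<le> card X + b \<Longrightarrow> cw_wwin H b G C F"
proof (induction n arbitrary: C F rule: less_induct)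
  case (less n)
  have fX: "finite X" using XV fin finite_subset by blast
  show ?case
  proof (cases "F \<inter> X = {}")
    case True
    then have FV: "F = verts G'" using less.prems VG' by blast
    have "verts G' \<inter> X = {}" "({}::'a set) \<inter> X = {}" using VG' by auto
    then have "cw_wwin H b G ({} \<union> C) (verts G')"
      using cw_phase2[OF VG' P W] less.prems by blast
    then show ?thesis using FV by simp
  next
    case False
    have fFX: "finite (F \<inter> X)" using fX by simp
    have n1: "n \<ge> 1" using False fFX less.prems(1) card_gt_0_iff[of "F \<inter> X"] by linarith
    define k where "k = min (b+1) n"
    have "k \<le> card (F \<inter> X)" using less.prems(1) k_def by simp
    then obtain S where S: "S \<subseteq> F \<inter> X" "card S = k"
      by (meson obtain_subset_with_card_n)
    have fS: "finite S" using S(1) fFX finite_subset by blast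
    have k1: "k \<ge> 1" using n1 k_def by simp
    have fC: "finite C" using less.prems(4) fX finite_subset by blast
    show ?thesis
    proof (rule cw_wwin.round[of S])
      show "S \<subseteq> F" "1 \<le> card S" "card S \<le> b + 1" using S k1 k_def by auto
      show "\<forall>v\<in>S. cw_wwin H b G (insert v C) (F - S)"
      proof
        fix v assume vS: "v \<in> S"
        have e: "(F - S) \<inter> X = F \<inter> X - S" by blast
        have cFS: "card ((F - S) \<inter> X) = n - k"
          unfolding e using card_Diff_subset[OF fS S(1)] S(2) less.prems(1) by simp
        have lt: "n - k < n" using k1 n1 by simp
        have vC: "v \<notin> C" using vS S(1) less.prems(5) by blast
        have cI: "card (insert v C) * (b+1) = card C * (b+1) + (b+1)"
          using vC fC by simp
        have p2: "F - S \<subseteq> verts G" "verts G' \<subseteq> F - S" "insert v C \<subseteq> X"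
          "insert v C \<inter> (F - S) = {}"
          using less.prems S(1) vS VG' by auto
        have inv: "card C * (b+1) + n \<le> card X" using less.prems(1,6) False by simp
        show "cw_wwin H b G (insert v C) (F - S)"
        proof (cases "n \<ge> b + 1")
          case True
          then have kb: "k = b+1" using k_def by simp
          have a1: "(F - S) \<inter> X \<noteq> {} \<longrightarrow> card (insert v C) * (b+1) + card ((F - S) \<inter> X) \<le> card X"
            using cFS kb cI inv True by simp
          have a2: "card (insert v C) * (b+1) \<le> card X + b"
            using cI inv True by simp
          show ?thesis using less.IH[OF lt cFS p2 a1 a2] .
        next
          case False
          then have kn: "k = n" using k_def by simp
          have a1: "(F - S) \<inter> X \<noteq> {} \<longrightarrow> card (insert v C) * (b+1) + card ((F - S) \<inter> X) \<le> card X"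
            using cFS kn fX by (simp add: card_eq_0_iff)
          have a2: "card (insert v C) * (b+1) \<le> card X + b"
            using cI inv False n1 by simp
          show ?thesis using less.IH[OF lt cFS p2 a1 a2] .
        qed
      qed
    qed
  qed
qed

lemma cw_lift:
  assumes fin: "finite (verts G)" and XV: "X \<subseteq> verts G" and VG': "verts G' = verts G - X"
    and P: "\<And>M. card (M \<inter> X) * (b+1) \<le> card X + b \<Longrightarrow> has_copy_in H G M \<Longrightarrow> has_copy_in H G' (M \<inter> verts G')"
    and W: "cw_wwin H b G' {} (verts G')"
  shows "cw_wwin H b G {} (verts G)"
proof -
  have e: "verts G \<inter> X = X" using XV by blast
  show ?thesis
    using cw_phase1[OF fin XV VG' P W, of "verts G" "card X" "{}"] e VG' by auto
qed




definition rem :: "'a graph \<Rightarrow> 'a set \<Rightarrow> 'a graph" where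
  "rem G X = (verts G - X, {e \<in> edges G. e \<inter> X = {}})"
definition remE :: "'a graph \<Rightarrow> 'a set \<Rightarrow> 'a graph" where
  "remE G e = (verts G, edges G - {e})"

lemma verts_rem[simp]: "verts (rem G X) = verts G - X" by (simp add: rem_def verts_def)
lemma edges_rem[simp]: "edges (rem G X) = {e \<in> edges G. e \<inter> X = {}}" by (simp add: rem_def edges_def)
lemma verts_remE[simp]: "verts (remE G e) = verts G" by (simp add: remE_def verts_def)
lemma edges_remE[simp]: "edges (remE G e) = edges G - {e}" by (simp add: remE_def edges_def)

lemma graph_edge_sub: "graph G \<Longrightarrow> e \<in> edges G \<Longrightarrow> e \<subseteq> verts G"
proof -
  assume g: "graph G" and e: "e \<in> edges G"
  then obtain x y where "x \<in> verts G" "y \<in> verts G" "e = {x, y}" unfolding graph_def by meson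
  then show ?thesis by simp
qed

lemma graph_fin_edges: "graph G \<Longrightarrow> finite (edges G)"
proof -
  assume g: "graph G"
  have "edges G \<subseteq> Pow (verts G)" using graph_edge_sub[OF g] by blast
  moreover have "finite (Pow (verts G))" using g unfolding graph_def by simp
  ultimately show ?thesis by (rule finite_subset)
qed

lemma emb_sub: "embedding H A f \<Longrightarrow> verts A \<subseteq> verts B \<Longrightarrow> edges A \<subseteq> edges B \<Longrightarrow> embedding H B f"
proof -
  assume a: "embedding H A f" "verts A \<subseteq> verts B" "edges A \<subseteq> edges B"
  from a(1) have e: "inj_on f (verts H)" "f ` verts H \<subseteq> verts A" "\<forall>e\<in>edges H. f ` e \<in> edges A"
    unfolding embedding_def by auto
  have "f ` verts H \<subseteq> verts B" using e(2) a(2) by (rule subset_trans)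
  moreover have "\<forall>e\<in>edges H. f ` e \<in> edges B" using e(3) a(3) by blast
  ultimately show ?thesis unfolding embedding_def using e(1) by (intro conjI)
qed

lemma emb_rem: "graph H \<Longrightarrow> embedding H G f \<Longrightarrow> f ` verts H \<inter> X = {} \<Longrightarrow> embedding H (rem G X) f"
proof -
  assume gH: "graph H" and e: "embedding H G f" and d: "f ` verts H \<inter> X = {}"
  have e1: "inj_on f (verts H)" "f ` verts H \<subseteq> verts G" "\<forall>d\<in>edges H. f ` d \<in> edges G"
    using e unfolding embedding_def by auto
  have "\<forall>d\<in>edges H. f ` d \<inter> X = {}"
  proof
    fix d assume "d \<in> edges H"
    then have "d \<subseteq> verts H" using graph_edge_sub[OF gH] by blast
    then show "f ` d \<inter> X = {}" using d by blast
  qed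
  then have "\<forall>d\<in>edges H. f ` d \<in> edges (rem G X)" using e1(3) by simp
  moreover have "f ` verts H \<subseteq> verts (rem G X)" using e1(2) d by auto
  ultimately show ?thesis unfolding embedding_def using e1(1) by (intro conjI)
qed

lemma graph_rem: "graph G \<Longrightarrow> graph (rem G X)"
proof -
  assume g: "graph G"
  have "\<exists>x y. x \<noteq> y \<and> x \<in> verts (rem G X) \<and> y \<in> verts (rem G X) \<and> e = {x, y}"
    if e: "e \<in> edges (rem G X)" for e
  proof -
    have e1: "e \<in> edges G" "e \<inter> X = {}" using e by auto
    obtain x y where "x \<noteq> y" "x \<in> verts G" "y \<in> verts G" "e = {x, y}"
      using g e1(1) unfolding graph_def by meson
    then show ?thesis using e1(2) by auto
  qed
  moreover have "finite (verts (rem G X))" using g unfolding graph_def by simp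
  ultimately show ?thesis unfolding graph_def by blast
qed

lemma graph_remE: "graph G \<Longrightarrow> graph (remE G e)"
  unfolding graph_def by simp

lemma emb_rtrancl: "(adj H)\<^sup>*\<^sup>* x y \<Longrightarrow> embedding H G f \<Longrightarrow> (adj G)\<^sup>*\<^sup>* (f x) (f y)"
proof (induction rule: rtranclp_induct)
  case base then show ?case by simp
next
  case (step y z)
  have "adj H y z" using step.hyps(2) .
  then have "{y, z} \<in> edges H" unfolding adj_def .
  moreover have "\<forall>d\<in>edges H. f ` d \<in> edges G" using step.prems unfolding embedding_def by auto
  ultimately have "f ` {y, z} \<in> edges G" by blast
  then have "adj G (f y) (f z)" unfolding adj_def image_insert image_empty .
  moreover have "(adj G)\<^sup>*\<^sup>* (f x) (f y)" using step.IH step.prems .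
  ultimately show ?case by (rule rtranclp.rtrancl_into_rtrancl[rotated])
qed


definition res :: "'b graph \<Rightarrow> nat \<Rightarrow> 'a graph \<Rightarrow> 'a graph \<Rightarrow> bool" where
  "res H b K Gi \<longleftrightarrow> (\<forall>t. MB_breaker_wins H b K t \<longrightarrow> MB_breaker_wins H b Gi t)
     \<and> (CW_waiter_wins H b K \<longrightarrow> CW_waiter_wins H b Gi)"

lemma game_lift:
  assumes fin: "finite (verts G)" and XV: "X \<subseteq> verts G" and VG': "verts G' = verts G - X"
    and b1: "b \<ge> 1"
    and P: "\<And>M. card (M \<inter> X) * (b+1) \<le> card X + b \<Longrightarrow> has_copy_in H G M \<Longrightarrow> has_copy_in H G' (M \<inter> verts G')"
    and R: "res H b K G'"
  shows "res H b K G"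
  using R mb_lift[OF fin XV VG' b1 P] cw_lift[OF fin XV VG' P]
  unfolding res_def MB_breaker_wins_def CW_waiter_wins_def by blast

lemma vK: "x \<in> verts (core H b G) \<longleftrightarrow> (\<exists>G'. subgraph G' G \<and> stable H b G' \<and> x \<in> verts G')"
  by (auto simp: core_def verts_def)
lemma eK: "x \<in> edges (core H b G) \<longleftrightarrow> (\<exists>G'. subgraph G' G \<and> stable H b G' \<and> x \<in> edges G')"
  by (auto simp: core_def edges_def)

lemma rem_step:
  assumes gH: "graph H" and sub: "subgraph Gi G" and b1: "b \<ge> 1"
    and Xne: "X \<noteq> {}" and XV: "X \<subseteq> verts Gi"
    and disj: "\<And>G''. subgraph G'' G \<Longrightarrow> stable H b G'' \<Longrightarrow> verts G'' \<inter> X = {}"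
    and avoid: "\<And>M f. embedding H Gi f \<Longrightarrow> f ` verts H \<subseteq> M \<Longrightarrow> card (M \<inter> X) * (b+1) \<le> card X + b
        \<Longrightarrow> f ` verts H \<inter> X = {}"
    and Kv: "verts (core H b G) \<subseteq> verts Gi" and Ke: "edges (core H b G) \<subseteq> edges Gi"
  shows "subgraph (rem Gi X) G \<and> verts (core H b G) \<subseteq> verts (rem Gi X)
     \<and> edges (core H b G) \<subseteq> edges (rem Gi X)
     \<and> card (verts (rem Gi X)) + card (edges (rem Gi X)) < card (verts Gi) + card (edges Gi)
     \<and> (res H b (core H b G) (rem Gi X) \<longrightarrow> res H b (core H b G) Gi)"
proof -
  have gGi: "graph Gi" using sub unfolding subgraph_def by blast
  have fin: "finite (verts Gi)" using gGi unfolding graph_def by blast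
  have s1: "subgraph (rem Gi X) G" using sub graph_rem[OF gGi] unfolding subgraph_def by auto
  have s2: "verts (core H b G) \<subseteq> verts (rem Gi X)"
  proof
    fix x assume x: "x \<in> verts (core H b G)"
    then obtain G'' where "subgraph G'' G" "stable H b G''" "x \<in> verts G''" using vK by metis
    then have "x \<notin> X" using disj by blast
    then show "x \<in> verts (rem Gi X)" using x Kv by auto
  qed
  have s3: "edges (core H b G) \<subseteq> edges (rem Gi X)"
  proof
    fix e assume eK': "e \<in> edges (core H b G)"
    then obtain G'' where G'': "subgraph G'' G" "stable H b G''" "e \<in> edges G''" using eK by metis
    have "graph G''" using G''(1) unfolding subgraph_def by blast
    then have "e \<subseteq> verts G''" using graph_edge_sub G''(3) by blast
    then have "e \<inter> X = {}" using disj[OF G''(1,2)] by blast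
    then show "e \<in> edges (rem Gi X)" using Ke eK' by auto
  qed
  have s4: "card (verts (rem Gi X)) + card (edges (rem Gi X)) < card (verts Gi) + card (edges Gi)"
  proof -
    have "card (verts Gi - X) < card (verts Gi)"
    proof -
      obtain x where "x \<in> X" using Xne by blast
      then have "verts Gi - X \<subset> verts Gi" using XV by blast
      then show ?thesis using fin by (simp add: psubset_card_mono)
    qed
    moreover have "card {e \<in> edges Gi. e \<inter> X = {}} \<le> card (edges Gi)"
      using graph_fin_edges[OF gGi] by (intro card_mono) auto
    ultimately show ?thesis by simp
  qed
  have s5: "res H b (core H b G) (rem Gi X) \<longrightarrow> res H b (core H b G) Gi"
  proof
    assume R: "res H b (core H b G) (rem Gi X)"
    show "res H b (core H b G) Gi"
    proof (rule game_lift[OF fin XV verts_rem b1 _ R])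
      fix M assume c: "card (M \<inter> X) * (b+1) \<le> card X + b" and hc: "has_copy_in H Gi M"
      then obtain f where f: "embedding H Gi f" "f ` verts H \<subseteq> M" unfolding has_copy_in_def by blast
      have d: "f ` verts H \<inter> X = {}" using avoid[OF f c] .
      have "embedding H (rem Gi X) f" using emb_rem[OF gH f(1) d] .
      moreover have "f ` verts H \<subseteq> verts Gi" using f(1) unfolding embedding_def by blast
      then have "f ` verts H \<subseteq> M \<inter> verts (rem Gi X)" using f(2) d by auto
      ultimately show "has_copy_in H (rem Gi X) (M \<inter> verts (rem Gi X))"
        unfolding has_copy_in_def by blast
    qed
  qed
  show ?thesis using s1 s2 s3 s4 s5 by blast
qed




lemma stable_sub:
  assumes "subgraph G'' G" "stable H b G''"
    and Kv: "verts (core H b G) \<subseteq> verts Gi" and Ke: "edges (core H b G) \<subseteq> edges Gi"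
  shows "verts G'' \<subseteq> verts Gi" "edges G'' \<subseteq> edges Gi"
proof -
  show "verts G'' \<subseteq> verts Gi"
  proof
    fix x assume "x \<in> verts G''"
    then have "x \<in> verts (core H b G)" using assms(1,2) vK by metis
    then show "x \<in> verts Gi" using Kv by blast
  qed
  show "edges G'' \<subseteq> edges Gi"
  proof
    fix x assume "x \<in> edges G''"
    then have "x \<in> edges (core H b G)" using assms(1,2) eK by metis
    then show "x \<in> edges Gi" using Ke by blast
  qed
qed

lemma case_vertex:
  assumes gH: "graph H" and sub: "subgraph Gi G" and b1: "b \<ge> 1" and bv: "bad_vertex H Gi v"
    and Kv: "verts (core H b G) \<subseteq> verts Gi" and Ke: "edges (core H b G) \<subseteq> edges Gi"
  shows "subgraph (rem Gi {v}) G \<and> verts (core H b G) \<subseteq> verts (rem Gi {v})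
     \<and> edges (core H b G) \<subseteq> edges (rem Gi {v})
     \<and> card (verts (rem Gi {v})) + card (edges (rem Gi {v})) < card (verts Gi) + card (edges Gi)
     \<and> (res H b (core H b G) (rem Gi {v}) \<longrightarrow> res H b (core H b G) Gi)"
proof (rule rem_step[OF gH sub b1])
  have bv': "v \<in> verts Gi" "\<not> (\<exists>f. embedding H Gi f \<and> v \<in> f ` verts H)"
    using bv unfolding bad_vertex_def by auto
  show "{v} \<noteq> {}" "{v} \<subseteq> verts Gi" using bv' by auto
  show "verts G'' \<inter> {v} = {}" if "subgraph G'' G" "stable H b G''" for G''
  proof (rule ccontr)
    assume "verts G'' \<inter> {v} \<noteq> {}"
    then have "v \<in> verts G''" by blast
    moreover have "\<not> bad_vertex H G'' v" using that(2) unfolding stable_def by blast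
    ultimately obtain f where "embedding H G'' f" "v \<in> f ` verts H" unfolding bad_vertex_def by blast
    moreover note stable_sub[OF that Kv Ke]
    ultimately have "embedding H Gi f" "v \<in> f ` verts H" using emb_sub by blast+
    then show False using bv' by blast
  qed
  show "f ` verts H \<inter> {v} = {}" if "embedding H Gi f" for f M using that bv' by blast
  show "verts (core H b G) \<subseteq> verts Gi" "edges (core H b G) \<subseteq> edges Gi" using Kv Ke by auto
qed

lemma case_set:
  assumes gH: "graph H" and sub: "subgraph Gi G" and b1: "b \<ge> 1" and bs: "bad_set H b Gi U"
    and Kv: "verts (core H b G) \<subseteq> verts Gi" and Ke: "edges (core H b G) \<subseteq> edges Gi"
  shows "subgraph (rem Gi U) G \<and> verts (core H b G) \<subseteq> verts (rem Gi U)
     \<and> edges (core H b G) \<subseteq> edges (rem Gi U)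
     \<and> card (verts (rem Gi U)) + card (edges (rem Gi U)) < card (verts Gi) + card (edges Gi)
     \<and> (res H b (core H b G) (rem Gi U) \<longrightarrow> res H b (core H b G) Gi)"
proof (rule rem_step[OF gH sub b1])
  have bs': "U \<subseteq> verts Gi" "2 \<le> card U" "card U \<le> b + 1"
    "\<not> (\<exists>f. embedding H Gi f \<and> card (f ` verts H \<inter> U) = 1)"
    using bs unfolding bad_set_def by auto
  have gGi: "graph Gi" using sub unfolding subgraph_def by blast
  have fU: "finite U" using bs'(1) gGi unfolding graph_def using finite_subset by auto
  show "U \<noteq> {}" using bs'(2) by auto
  show "U \<subseteq> verts Gi" using bs'(1) .
  show "verts G'' \<inter> U = {}" if G'': "subgraph G'' G" "stable H b G''" for G''
  proof (rule ccontr)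
    assume ne: "verts G'' \<inter> U \<noteq> {}"
    define W where "W = U \<inter> verts G''"
    have fW: "finite W" using fU W_def by simp
    have Wne: "W \<noteq> {}" using ne W_def by blast
    have st: "\<not> bad_vertex H G'' w" "\<not> bad_set H b G'' W'" for w W'
      using G''(2) unfolding stable_def by blast+
    have "\<exists>g. embedding H G'' g \<and> card (g ` verts H \<inter> U) = 1"
    proof (cases "card W = 1")
      case True
      then obtain w where w: "W = {w}" using card_1_singletonE by blast
      then have "w \<in> verts G''" using W_def by blast
      then obtain g where g: "embedding H G'' g" "w \<in> g ` verts H"
        using st(1)[of w] unfolding bad_vertex_def by blast
      have "g ` verts H \<subseteq> verts G''" using g(1) unfolding embedding_def by blast
      then have "g ` verts H \<inter> U = {w}" using g(2) w W_def by blast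
      then show ?thesis using g(1) by auto
    next
      case False
      then have "card W \<ge> 2" using fW Wne by (metis One_nat_def Suc_1 Suc_leI card_gt_0_iff le_antisym not_less_eq_eq)
      moreover have "card W \<le> b + 1" using card_mono[OF fU, of W] W_def bs'(3) by auto
      moreover have "W \<subseteq> verts G''" using W_def by blast
      ultimately obtain g where g: "embedding H G'' g" "card (g ` verts H \<inter> W) = 1"
        using st(2)[of W] unfolding bad_set_def by blast
      have "g ` verts H \<subseteq> verts G''" using g(1) unfolding embedding_def by blast
      then have "g ` verts H \<inter> W = g ` verts H \<inter> U" using W_def by blast
      then show ?thesis using g by auto
    qed
    then obtain g where g: "embedding H G'' g" "card (g ` verts H \<inter> U) = 1" by blast
    note s = stable_sub[OF G'' Kv Ke]
    have "embedding H Gi g" using emb_sub[OF g(1) s] .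
    then show False using g(2) bs'(4) by blast
  qed
  show "f ` verts H \<inter> U = {}"
    if f: "embedding H Gi f" "f ` verts H \<subseteq> M" "card (M \<inter> U) * (b + 1) \<le> card U + b" for M f
  proof -
    have "card (M \<inter> U) * (b+1) \<le> 2 * b + 1" using f(3) bs'(3) by linarith
    then have c1: "card (M \<inter> U) \<le> 1"
      by (metis One_nat_def Suc_1 add.commute add_le_cancel_right le_add1 le_trans
          mult_le_mono1 not_less_eq_eq plus_1_eq_Suc mult_2 distrib_right nat_mult_1 add_Suc_right)
    have "card (f ` verts H \<inter> U) \<le> card (M \<inter> U)"
      using fU f(2) by (intro card_mono) auto
    then have "card (f ` verts H \<inter> U) = 0" using c1 f(1) bs'(4) by fastforce
    then show ?thesis using fU by simp
  qed
  show "verts (core H b G) \<subseteq> verts Gi" "edges (core H b G) \<subseteq> edges Gi" using Kv Ke by auto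
qed

lemma case_comp:
  assumes gH: "graph H" and cH: "connected_graph H" and sub: "subgraph Gi G" and b1: "b \<ge> 1"
    and sc: "small_component H b Gi C"
    and Kv: "verts (core H b G) \<subseteq> verts Gi" and Ke: "edges (core H b G) \<subseteq> edges Gi"
  shows "subgraph (rem Gi C) G \<and> verts (core H b G) \<subseteq> verts (rem Gi C)
     \<and> edges (core H b G) \<subseteq> edges (rem Gi C)
     \<and> card (verts (rem Gi C)) + card (edges (rem Gi C)) < card (verts Gi) + card (edges Gi)
     \<and> (res H b (core H b G) (rem Gi C) \<longrightarrow> res H b (core H b G) Gi)"
proof (rule rem_step[OF gH sub b1])
  obtain v0 where v0: "v0 \<in> verts Gi" "C = component Gi v0"
    and cC: "card C \<le> (b + 1) * (card (verts H) - 1)"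
    using sc unfolding small_component_def by blast
  have gGi: "graph Gi" using sub unfolding subgraph_def by blast
  have CV: "C \<subseteq> verts Gi" using v0(2) unfolding component_def by blast
  have fC: "finite C" using CV gGi unfolding graph_def using finite_subset by auto
  have memC: "u \<in> C \<longleftrightarrow> u \<in> verts Gi \<and> (adj Gi)\<^sup>*\<^sup>* v0 u" for u
    using v0(2) unfolding component_def by blast
  show "C \<noteq> {}" using memC v0(1) by blast
  show "C \<subseteq> verts Gi" using CV .
  show "verts G'' \<inter> C = {}" if G'': "subgraph G'' G" "stable H b G''" for G''
  proof (rule ccontr)
    assume "verts G'' \<inter> C \<noteq> {}"
    then obtain w where w: "w \<in> verts G''" "w \<in> C" by blast
    note s = stable_sub[OF G'' Kv Ke]
    have adjm: "adj G'' x y \<longrightarrow> adj Gi x y" for x y using s(2) unfolding adj_def by blast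
    have "component G'' w \<subseteq> C"
    proof
      fix u assume "u \<in> component G'' w"
      then have u: "u \<in> verts G''" "(adj G'')\<^sup>*\<^sup>* w u" unfolding component_def by auto
      have "(adj Gi)\<^sup>*\<^sup>* w u" using mono_rtranclp[of "adj G''" "adj Gi", OF adjm] u(2) by blast
      moreover have "(adj Gi)\<^sup>*\<^sup>* v0 w" using w(2) memC by blast
      ultimately have "(adj Gi)\<^sup>*\<^sup>* v0 u" by (rule rtranclp_trans[rotated])
      moreover have "u \<in> verts Gi" using u(1) s(1) by blast
      ultimately show "u \<in> C" using memC by blast
    qed
    then have "card (component G'' w) \<le> card C" using fC by (rule card_mono[rotated])
    then have "small_component H b G'' (component G'' w)"
      unfolding small_component_def using w(1) cC by auto
    then show False using G''(2) unfolding stable_def by blast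
  qed
  show "f ` verts H \<inter> C = {}"
    if f: "embedding H Gi f" "f ` verts H \<subseteq> M" "card (M \<inter> C) * (b + 1) \<le> card C + b" for M f
  proof (rule ccontr)
    assume "f ` verts H \<inter> C \<noteq> {}"
    then obtain x where x: "x \<in> verts H" "f x \<in> C" by blast
    have fe: "inj_on f (verts H)" "f ` verts H \<subseteq> verts Gi" using f(1) unfolding embedding_def by auto
    have conn: "\<forall>y\<in>verts H. (adj H)\<^sup>*\<^sup>* x y" using cH x(1) unfolding connected_graph_def by blast
    have "f ` verts H \<subseteq> C"
    proof
      fix z assume "z \<in> f ` verts H"
      then obtain y where y: "y \<in> verts H" "z = f y" by blast
      have "(adj Gi)\<^sup>*\<^sup>* (f x) (f y)" using emb_rtrancl[OF _ f(1)] conn y(1) by blast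
      moreover have "(adj Gi)\<^sup>*\<^sup>* v0 (f x)" using x(2) memC by blast
      ultimately have "(adj Gi)\<^sup>*\<^sup>* v0 (f y)" by (rule rtranclp_trans[rotated])
      moreover have "f y \<in> verts Gi" using fe(2) y(1) by blast
      ultimately show "z \<in> C" using memC y(2) by blast
    qed
    then have "f ` verts H \<subseteq> M \<inter> C" using f(2) by blast
    then have "card (f ` verts H) \<le> card (M \<inter> C)" using fC by (intro card_mono) auto
    moreover have "card (f ` verts H) = card (verts H)" using card_image[OF fe(1)] .
    ultimately have k: "card (verts H) \<le> card (M \<inter> C)" by simp
    have "card (verts H) * (b+1) \<le> card (M \<inter> C) * (b+1)" using k by (rule mult_le_mono1)
    then have le: "card (verts H) * (b+1) \<le> (b + 1) * (card (verts H) - 1) + b" using f(3) cC by linarith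
    have fH: "finite (verts H)" using gH unfolding graph_def by blast
    have "card (verts H) \<noteq> 0" using fH x(1) by auto
    then obtain j where "card (verts H) = Suc j" using not0_implies_Suc by blast
    then show False using le by simp
  qed
  show "verts (core H b G) \<subseteq> verts Gi" "edges (core H b G) \<subseteq> edges Gi" using Kv Ke by auto
qed

lemma case_edge:
  assumes gH: "graph H" and sub: "subgraph Gi G" and b1: "b \<ge> 1" and be: "bad_edge H Gi e"
    and Kv: "verts (core H b G) \<subseteq> verts Gi" and Ke: "edges (core H b G) \<subseteq> edges Gi"
  shows "subgraph (remE Gi e) G \<and> verts (core H b G) \<subseteq> verts (remE Gi e)
     \<and> edges (core H b G) \<subseteq> edges (remE Gi e)
     \<and> card (verts (remE Gi e)) + card (edges (remE Gi e)) < card (verts Gi) + card (edges Gi)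
     \<and> (res H b (core H b G) (remE Gi e) \<longrightarrow> res H b (core H b G) Gi)"
proof -
  have be': "e \<in> edges Gi" "\<not> (\<exists>f. embedding H Gi f \<and> e \<in> (\<lambda>d. f ` d) ` edges H)"
    using be unfolding bad_edge_def by auto
  have gGi: "graph Gi" using sub unfolding subgraph_def by blast
  have fin: "finite (verts Gi)" using gGi unfolding graph_def by blast
  have s1: "subgraph (remE Gi e) G" using sub graph_remE[OF gGi] unfolding subgraph_def by auto
  have eK': "e \<notin> edges (core H b G)"
  proof
    assume "e \<in> edges (core H b G)"
    then obtain G'' where G'': "subgraph G'' G" "stable H b G''" "e \<in> edges G''" using eK by metis
    have "\<not> bad_edge H G'' e" using G''(2) unfolding stable_def by blast
    then obtain f where f: "embedding H G'' f" "e \<in> (\<lambda>d. f ` d) ` edges H"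
      using G''(3) unfolding bad_edge_def by blast
    note s = stable_sub[OF G''(1,2) Kv Ke]
    have "embedding H Gi f" using emb_sub[OF f(1) s] .
    then show False using f(2) be'(2) by blast
  qed
  have s2: "verts (core H b G) \<subseteq> verts (remE Gi e)" using Kv by simp
  have s3: "edges (core H b G) \<subseteq> edges (remE Gi e)" unfolding edges_remE using Ke eK' by blast
  have s4: "card (verts (remE Gi e)) + card (edges (remE Gi e)) < card (verts Gi) + card (edges Gi)"
  proof -
    have "card (edges Gi - {e}) < card (edges Gi)" using card_Diff1_less[OF graph_fin_edges[OF gGi] be'(1)] .
    then show ?thesis unfolding verts_remE edges_remE by linarith
  qed
  have s5: "res H b (core H b G) (remE Gi e) \<longrightarrow> res H b (core H b G) Gi"
  proof
    assume R: "res H b (core H b G) (remE Gi e)"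
    have VV: "verts (remE Gi e) = verts Gi - {}" by simp
    show "res H b (core H b G) Gi"
    proof (rule game_lift[OF fin _ VV b1 _ R])
      show "{} \<subseteq> verts Gi" by simp
      fix M assume c: "card (M \<inter> {}) * (b + 1) \<le> card {} + b" and hc: "has_copy_in H Gi M"
      obtain f where f: "embedding H Gi f" "f ` verts H \<subseteq> M" using hc unfolding has_copy_in_def by blast
      have fe: "inj_on f (verts H)" "f ` verts H \<subseteq> verts Gi" "\<forall>d\<in>edges H. f ` d \<in> edges Gi"
        using f(1) unfolding embedding_def by auto
      have "\<forall>d\<in>edges H. f ` d \<noteq> e"
      proof
        fix d assume d: "d \<in> edges H"
        show "f ` d \<noteq> e"
        proof
          assume fd: "f ` d = e"
          have "e \<in> (\<lambda>d. f ` d) ` edges H" using fd d by (simp add: image_iff) blast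
          with f(1) have "\<exists>f. embedding H Gi f \<and> e \<in> (\<lambda>d. f ` d) ` edges H" by (intro exI conjI)
          then show False using be'(2) by contradiction
        qed
      qed
      then have "\<forall>d\<in>edges H. f ` d \<in> edges (remE Gi e)" using fe(3) by simp
      then have "embedding H (remE Gi e) f" unfolding embedding_def using fe(1,2) by simp
      moreover have "f ` verts H \<subseteq> M \<inter> verts (remE Gi e)" using f(2) fe(2) by auto
      ultimately show "has_copy_in H (remE Gi e) (M \<inter> verts (remE Gi e))"
        unfolding has_copy_in_def by blast
    qed
  qed
  show ?thesis by (intro conjI s1 s2 s3 s4 s5)
qed

lemma chain:
  assumes gH: "graph H" and cH: "connected_graph H" and b1: "b \<ge> 1"
  shows "card (verts Gi) + card (edges Gi) = n \<Longrightarrow> subgraph Gi G \<Longrightarrow>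
    verts (core H b G) \<subseteq> verts Gi \<Longrightarrow> edges (core H b G) \<subseteq> edges Gi \<Longrightarrow> res H b (core H b G) Gi"
proof (induction n arbitrary: Gi rule: less_induct)
  case (less n)
  show ?case
  proof (cases "stable H b Gi")
    case True
    have "verts Gi \<subseteq> verts (core H b G)"
    proof
      fix x assume "x \<in> verts Gi"
      then show "x \<in> verts (core H b G)" unfolding vK using less.prems(2) True by blast
    qed
    moreover have "edges Gi \<subseteq> edges (core H b G)"
    proof
      fix x assume "x \<in> edges Gi"
      then show "x \<in> edges (core H b G)" unfolding eK using less.prems(2) True by blast
    qed
    ultimately have "verts Gi = verts (core H b G)" "edges Gi = edges (core H b G)"
      using less.prems(3,4) by auto
    then have "Gi = core H b G" unfolding verts_def edges_def by (simp add: prod_eq_iff)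
    then show ?thesis unfolding res_def by simp
  next
    case False
    then consider (v) v where "bad_vertex H Gi v" | (e) e where "bad_edge H Gi e"
      | (s) U where "bad_set H b Gi U" | (c) C where "small_component H b Gi C"
      unfolding stable_def by blast
    then show ?thesis
    proof cases
      case v
      note r = case_vertex[OF gH less.prems(2) b1 v less.prems(3,4)]
      then show ?thesis using less.IH[OF _ refl] less.prems(1) by blast
    next
      case e
      note r = case_edge[OF gH less.prems(2) b1 e less.prems(3,4)]
      then show ?thesis using less.IH[OF _ refl] less.prems(1) by blast
    next
      case s
      note r = case_set[OF gH less.prems(2) b1 s less.prems(3,4)]
      then show ?thesis using less.IH[OF _ refl] less.prems(1) by blast
    next
      case c
      note r = case_comp[OF gH cH less.prems(2) b1 c less.prems(3,4)]
      then show ?thesis using less.IH[OF _ refl] less.prems(1) by blast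
    qed
  qed
qed

theorem mainTheorem12:
  fixes G :: "'a graph" and H :: "'b graph" and b :: nat
  assumes "graph G" and "graph H" and "connected_graph H" and "b \<ge> 1"
  shows "(\<forall>maker_first. MB_breaker_wins H b (core H b G) maker_first
              \<longrightarrow> MB_breaker_wins H b G maker_first)
       \<and> (CW_waiter_wins H b (core H b G) \<longrightarrow> CW_waiter_wins H b G)"
proof -
  have sub: "subgraph G G" using assms(1) unfolding subgraph_def by blast
  have Kv: "verts (core H b G) \<subseteq> verts G"
  proof
    fix x assume "x \<in> verts (core H b G)"
    then obtain G'' where "subgraph G'' G" "x \<in> verts G''" using vK by metis
    then show "x \<in> verts G" unfolding subgraph_def by blast
  qed
  have Ke: "edges (core H b G) \<subseteq> edges G"
  proof
    fix x assume "x \<in> edges (core H b G)"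
    then obtain G'' where "subgraph G'' G" "x \<in> edges G''" using eK by metis
    then show "x \<in> edges G" unfolding subgraph_def by blast
  qed
  have "res H b (core H b G) G" using chain[OF assms(2,3,4) refl sub Kv Ke] .
  then show ?thesis unfolding res_def .
qed


end
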